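(* Let $N\ge1$, $\alpha\in\mathbb{C}$, and $u_0,\ldots,u_N\in\mathbb{C}$ with $u_j\notin\Lambda_\tau$ and $u_j+\alpha\tau\notin\Lambda_\tau$ for all $j$. Put $u=u_0+\cdots+u_N$. Then $$e^{2\pi i\alpha u}q^{\alpha^2(N+1)/2}\,\hat\mu_N(-\alpha\tau-u_0,\ldots,-\alpha\tau-u_N;\alpha+1;\tau)=\frac{(-1)^{N+1}\vartheta(u_0)\cdots\vartheta(u_N)}{\vartheta(u_0+\alpha\tau)\cdots\vartheta(u_N+\alpha\tau)}\,\hat\mu_N(u_0,\ldots,u_N;\alpha+1;\tau),$$ where $q^{\alpha^2(N+1)/2}:=e^{\pi i\alpha^2(N+1)\tau}$.
   Context: Fix $\tau$ with $\operatorname{Im}\tau>0$, $q=e^{2\pi i\tau}$, $\Lambda_\tau=\mathbb{Z}+\tau\mathbb{Z}$, $q^\beta:=e^{2\pi i\beta\tau}$. $(x;q)_\infty=\prod_{j\ge0}(1-xq^j)$. $\vartheta(u)=\vartheta(u;\tau)=-ie^{-\pi iu}q^{1/8}(q;q)_\infty(e^{2\pi iu};q)_\infty(qe^{-2\pi iu};q)_\infty$. For $n\in\mathbb{Z}^N$, $|n|=n_1+\cdots+n_N$. The multivariable generalized $\mu$-function is $$\hat\mu_N(u_0,\ldots,u_N;\beta;\tau)=e^{\pi i(\beta-1)u}\sum_{n\in\mathbb{Z}^N}\frac{e^{\pi iu_0}\,(e^{2\pi iu_0}q^{\beta+|n|};q)_\infty}{(e^{2\pi iu_0}q^{|n|};q)_\infty}\prod_{j=1}^N\frac{(-1)^{n_j}e^{-2\pi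 in_ju_j}q^{n_j(n_j+1)/2}}{\vartheta(u_j;\tau)},\quad u=u_0+\cdots+u_N,$$ defined for $u_0,\ldots,u_N\notin\Lambda_\tau$. *)

theory Defs
  imports "HOL-Analysis.Analysis"
begin

definition nome :: "complex \<Rightarrow> complex" where
  "nome \<tau> = exp (2 * pi * \<i> * \<tau>)"

definition qpow :: "complex \<Rightarrow> complex \<Rightarrow> complex" where
  "qpow \<tau> \<beta> = exp (2 * pi * \<i> * \<beta> * \<tau>)"

definition qpoch :: "complex \<Rightarrow> complex \<Rightarrow> complex" where
  "qpoch x q = (\<Prod>j. 1 - x * q ^ j)"

definition lattice :: "complex \<Rightarrow> complex set" where
  "lattice \<tau> = {of_int m + of_int n * \<tau> | m n. True}"

definition theta :: "complex \<Rightarrow> complex \<Rightarrow> complex" where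
  "theta u \<tau> = - \<i> * exp (- pi * \<i> * u) * qpow \<tau> (1/8) *
     qpoch (nome \<tau>) (nome \<tau>) * qpoch (exp (2 * pi * \<i> * u)) (nome \<tau>) *
     qpoch (nome \<tau> * exp (- 2 * pi * \<i> * u)) (nome \<tau>)"

text \<open>Index set Z^N, realised as integer functions supported on {1..N}.\<close>
definition intvecs :: "nat \<Rightarrow> (nat \<Rightarrow> int) set" where
  "intvecs N = {n. \<forall>j. j \<notin> {1..N} \<longrightarrow> n j = 0}"

definition muhat :: "nat \<Rightarrow> (nat \<Rightarrow> complex) \<Rightarrow> complex \<Rightarrow> complex \<Rightarrow> complex" where
  "muhat N u \<beta> \<tau> =
     exp (pi * \<i> * (\<beta> - 1) * (\<Sum>j\<le>N. u j)) *
     (\<Sum>\<^sub>\<infinity>n\<in>intvecs N.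
        exp (pi * \<i> * u 0) *
        qpoch (exp (2 * pi * \<i> * u 0) * qpow \<tau> (\<beta> + of_int (\<Sum>j=1..N. n j))) (nome \<tau>) /
        qpoch (exp (2 * pi * \<i> * u 0) * qpow \<tau> (of_int (\<Sum>j=1..N. n j))) (nome \<tau>) *
        (\<Prod>j=1..N. (-1) powi (n j) * exp (- 2 * pi * \<i> * of_int (n j) * u j) *
                     qpow \<tau> (of_int (n j * (n j + 1)) / 2) / theta (u j) \<tau>))"

end

theory Submission
  imports Defs
begin


definition EE :: "complex \<Rightarrow> complex" where "EE z = exp (2 * pi * \<i> * z)"
definition QQ :: "complex \<Rightarrow> complex \<Rightarrow> complex" where "QQ t z = qpoch (EE z) (EE t)"

lemma EE_add: "EE (a + b) = EE a * EE b"
  unfolding EE_def by (simp add: distrib_left exp_add)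

lemma EE_pow: "EE a ^ j = EE (of_nat j * a)"
  unfolding EE_def by (simp add: exp_of_nat_mult[symmetric] mult_ac)

lemma norm_EE: "Im t > 0 \<Longrightarrow> norm (EE t) < 1"
  unfolding EE_def by simp

lemma EE_eq_1: "EE z = 1 \<Longrightarrow> \<exists>k::int. z = of_int k"
proof -
  assume "EE z = 1"
  then have "Re (2 * pi * \<i> * z) = 0 \<and> (\<exists>n::int. Im (2 * pi * \<i> * z) = of_int (2 * n) * pi)"
    unfolding EE_def exp_eq_1 by simp
  then obtain n :: int where h: "Im z = 0" "2 * pi * Re z = of_int (2*n) * pi" by auto
  then have "Re z = of_int n" by simp
  with h(1) have "z = of_int n" by (simp add: complex_eq_iff)
  then show ?thesis by blast
qed

lemma qpoch_conv: "norm (q::complex) < 1 \<Longrightarrow> convergent_prod (\<lambda>j. 1 - x * q ^ j)"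
proof -
  assume q: "norm q < 1"
  have "summable (\<lambda>j. norm x * norm q ^ j)"
    using q by (intro summable_mult summable_geometric) simp
  then have "summable (\<lambda>j. norm ((1 - x * q ^ j) - 1))"
    by (simp add: norm_mult norm_power)
  then show ?thesis
    by (intro abs_convergent_prod_imp_convergent_prod summable_imp_abs_convergent_prod)
qed

lemma qpoch_shift: "norm (q::complex) < 1 \<Longrightarrow> x \<noteq> 1 \<Longrightarrow> qpoch x q = (1 - x) * qpoch (x * q) q"
proof -
  assume q: "norm q < 1" and x: "x \<noteq> 1"
  have "(\<Prod>n. (\<lambda>j. 1 - x * q ^ j) (Suc n)) = (\<Prod>j. 1 - x * q ^ j) / (1 - x * q ^ 0)"
    by (rule prodinf_split_head[OF qpoch_conv[OF q]]) (use x in simp)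
  moreover have "(\<lambda>n. (\<lambda>j. 1 - x * q ^ j) (Suc n)) = (\<lambda>j. 1 - x * q * q ^ j)"
    by (simp add: mult_ac)
  ultimately show ?thesis using x unfolding qpoch_def by simp
qed

lemma qpoch_nonzero: "norm (q::complex) < 1 \<Longrightarrow> (\<And>j. x * q ^ j \<noteq> 1) \<Longrightarrow> qpoch x q \<noteq> 0"
  unfolding qpoch_def by (rule prodinf_nonzero[OF qpoch_conv]) auto

lemma lattice_iff: "z \<in> lattice t \<longleftrightarrow> (\<exists>m n::int. z = of_int m + of_int n * t)"
  unfolding lattice_def by auto

lemma lattice_uminus: "- z \<in> lattice t \<longleftrightarrow> z \<in> lattice t"
proof -
  have *: "- z \<in> lattice t" if "z \<in> lattice t" for z
  proof -
    from that obtain m n where "z = of_int m + of_int n * t" by (auto simp: lattice_iff)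
    then have "- z = of_int (-m) + of_int (-n) * t" by simp
    then show ?thesis unfolding lattice_iff by blast
  qed
  show ?thesis using *[of z] *[of "-z"] by auto
qed

lemma lattice_add_int: "z + of_int a + of_int b * t \<in> lattice t \<longleftrightarrow> z \<in> lattice t"
proof -
  have *: "z + of_int a + of_int b * t \<in> lattice t" if "z \<in> lattice t" for z a b
  proof -
    from that obtain m n where "z = of_int m + of_int n * t" by (auto simp: lattice_iff)
    then have "z + of_int a + of_int b * t = of_int (m + a) + of_int (n + b) * t" by (simp add: algebra_simps)
    then show ?thesis unfolding lattice_iff by blast
  qed
  show ?thesis using *[of z a b] *[of "z + of_int a + of_int b * t" "-a" "-b"] by auto
qed

lemma QQ_nonzero:
  assumes "Im t > 0" "z \<notin> lattice t" shows "QQ t z \<noteq> 0"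
  unfolding QQ_def
proof (rule qpoch_nonzero)
  show "norm (EE t) < 1" using assms norm_EE by blast
  fix j
  show "EE z * EE t ^ j \<noteq> 1"
  proof
    assume "EE z * EE t ^ j = 1"
    then have "EE (z + of_nat j * t) = 1" by (simp add: EE_add EE_pow)
    then obtain k :: int where "z + of_nat j * t = of_int k" using EE_eq_1 by blast
    then have "z = of_int k + of_int (- int j) * t" by (simp add: algebra_simps)
    then show False using assms(2) unfolding lattice_iff by blast
  qed
qed

lemma EE_ne1: "z \<notin> lattice t \<Longrightarrow> EE z \<noteq> 1"
proof
  assume "z \<notin> lattice t" "EE z = 1"
  then obtain k :: int where "z = of_int k" using EE_eq_1 by blast
  then have "z = of_int k + of_int 0 * t" by simp
  with \<open>z \<notin> lattice t\<close> show False unfolding lattice_iff by blast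
qed

lemma QQ_shift:
  assumes "Im t > 0" "z \<notin> lattice t" shows "QQ t z = (1 - EE z) * QQ t (z + t)"
  unfolding QQ_def EE_add using qpoch_shift[OF norm_EE[OF assms(1)] EE_ne1[OF assms(2)]] .



lemma theta_QQ: "theta z t = - \<i> * exp (- pi * \<i> * z) * qpow t (1/8) * QQ t t * QQ t z * QQ t (t - z)"
proof -
  have "nome t * exp (- 2 * pi * \<i> * z) = EE (t - z)"
    unfolding nome_def EE_def by (simp add: exp_add[symmetric] algebra_simps)
  then show ?thesis unfolding theta_def QQ_def by (simp add: nome_def EE_def)
qed

lemma QQ_tt_nonzero: "Im t > 0 \<Longrightarrow> QQ t t \<noteq> 0"
  unfolding QQ_def
proof (rule qpoch_nonzero)
  assume t: "Im t > 0"
  show n: "norm (EE t) < 1" using norm_EE t by blast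
  fix j
  have "norm (EE t ^ Suc j) < 1" using n
    by (simp only: norm_power power_less_one_iff norm_ge_zero) simp
  then have "norm (EE t * EE t ^ j) < 1" by simp
  then show "EE t * EE t ^ j \<noteq> 1" by auto
qed

lemma theta_nonzero: assumes "Im t > 0" "z \<notin> lattice t" shows "theta z t \<noteq> 0"
proof -
  have "t - z \<notin> lattice t"
  proof
    assume "t - z \<in> lattice t"
    then have "-z + of_int 0 + of_int 1 * t \<in> lattice t" by simp
    then have "-z \<in> lattice t" by (rule iffD1[OF lattice_add_int])
    with assms show False by (simp add: lattice_uminus)
  qed
  then show ?thesis unfolding theta_QQ using assms QQ_nonzero QQ_tt_nonzero
    by (simp add: qpow_def)
qed

lemma theta_odd: assumes "Im t > 0" "z \<notin> lattice t" shows "theta (- z) t = - theta z t"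
proof -
  have mz: "- z \<notin> lattice t" using assms by (simp add: lattice_uminus)
  have 1: "QQ t (-z) = (1 - EE (-z)) * QQ t (t - z)" using QQ_shift[OF assms(1) mz] by simp
  have 2: "QQ t z = (1 - EE z) * QQ t (t + z)" using QQ_shift[OF assms(1,2)] by (simp add: add.commute)
  have e1: "exp (pi * \<i> * z) * EE (-z) = exp (- pi * \<i> * z)"
    unfolding EE_def by (simp add: exp_add[symmetric] algebra_simps)
  have e2: "exp (- pi * \<i> * z) * EE z = exp (pi * \<i> * z)"
    unfolding EE_def by (simp add: exp_add[symmetric] algebra_simps)
  have key: "exp (pi * \<i> * z) * (1 - EE (-z)) = - (exp (- pi * \<i> * z) * (1 - EE z))"
    using e1 e2 by (simp add: algebra_simps)
  have "theta (- z) t = - \<i> * qpow t (1/8) * QQ t t * QQ t (t - z) * QQ t (t + z) * (exp (pi * \<i> * z) * (1 - EE (-z)))"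
    unfolding theta_QQ 1 by (simp add: algebra_simps)
  also have "\<dots> = - (- \<i> * qpow t (1/8) * QQ t t * QQ t (t - z) * QQ t (t + z) * (exp (- pi * \<i> * z) * (1 - EE z)))"
    by (simp only: key) simp
  also have "\<dots> = - theta z t"
    unfolding theta_QQ 2 by (simp add: algebra_simps)
  finally show ?thesis .
qed



lemma int_two_sided:
  fixes D H p r :: "int \<Rightarrow> complex"
  assumes sD: "\<And>m. D (m+1) * p m = D m * r m" and sH: "\<And>m. H (m+1) * p m = H m * r m"
    and p: "\<And>m. p m \<noteq> 0" and r: "\<And>m. r m \<noteq> 0" and b: "D 0 = c * H 0"
  shows "D m = c * H m"
proof (induct m rule: int_induct[where k=0])
  case base then show ?case using b by simp
next
  case (step1 i)
  have "D (i+1) * p i = c * H (i+1) * p i" using sD[of i] sH[of i] step1(2) by simp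
  then show ?case using p[of i] by simp
next
  case (step2 i)
  have e1: "D (i-1) * r (i-1) = D i * p (i-1)" using sD[of "i-1"] by simp
  have e2: "H (i-1) * r (i-1) = H i * p (i-1)" using sH[of "i-1"] by simp
  have "D (i-1) * r (i-1) = (c * H (i-1)) * r (i-1)" using e1 e2 step2(2) by (simp add: mult.assoc)
  then show ?case using r[of "i-1"] by simp
qed

lemma EE_neg: "EE (- z) * EE z = 1"
  by (simp add: EE_add[symmetric]) (simp add: EE_def)

lemma EE_nonzero: "EE z \<noteq> 0" by (simp add: EE_def)

lemma latt_shift: "z \<notin> lattice t \<Longrightarrow> z + of_int k * t \<notin> lattice t"
  using lattice_add_int[of z 0 k t] by simp

lemma core:
  fixes t \<alpha> u0 :: complex
  assumes t: "Im t > 0" and u0: "u0 \<notin> lattice t" and w: "u0 + \<alpha> * t \<notin> lattice t"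
  defines "v0 \<equiv> - \<alpha> * t - u0"
  shows "exp (pi * \<i> * v0) * QQ t (v0 + (\<alpha> + 1 + of_int (- m)) * t) / QQ t (v0 + of_int (- m) * t)
          * EE (- (\<alpha> + 1) * of_int m * t)
       = (- theta u0 t / theta (u0 + \<alpha> * t) t) *
         (exp (pi * \<i> * u0) * QQ t (u0 + (\<alpha> + 1 + of_int m) * t) / QQ t (u0 + of_int m * t))"
proof -
  define g where "g m = exp (pi * \<i> * v0) * QQ t (v0 + (\<alpha> + 1 + of_int (- m)) * t) / QQ t (v0 + of_int (- m) * t)" for m :: int
  define D where "D m = g m * EE (- (\<alpha> + 1) * of_int m * t)" for m :: int
  define H where "H m = exp (pi * \<i> * u0) * QQ t (u0 + (\<alpha> + 1 + of_int m) * t) / QQ t (u0 + of_int m * t)" for m :: int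
  define c where "c = - theta u0 t / theta (u0 + \<alpha> * t) t"
  define w where "w = u0 + \<alpha> * t"
  define p where "p m = 1 - EE (u0 + (\<alpha> + 1 + of_int m) * t)" for m :: int
  define r where "r m = 1 - EE (u0 + of_int m * t)" for m :: int
  have wl: "w \<notin> lattice t" using w w_def by simp
  have nl: "z + of_int k * t \<notin> lattice t" if "z \<notin> lattice t" for z k
    using latt_shift[OF that] .
  have nlm: "- (z + of_int k * t) \<notin> lattice t" if "z \<notin> lattice t" for z k
    by (simp only: lattice_uminus) (rule latt_shift[OF that])
  have pnz: "p m \<noteq> 0" for m
  proof -
    have "u0 + (\<alpha> + 1 + of_int m) * t = w + of_int (m+1) * t" by (simp add: w_def algebra_simps)
    then show ?thesis unfolding p_def using EE_ne1[OF nl[OF wl, of "m+1"]] by simp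
  qed
  have rnz: "r m \<noteq> 0" for m unfolding r_def using EE_ne1[OF nl[OF u0, of m]] by simp
  have sH: "H (m+1) * p m = H m * r m" for m
  proof -
    define a where "a = u0 + (\<alpha> + 1 + of_int m) * t"
    define b where "b = u0 + of_int m * t"
    have a1: "u0 + (\<alpha> + 1 + of_int (m+1)) * t = a + t" by (simp add: a_def algebra_simps)
    have b1: "u0 + of_int (m+1) * t = b + t" by (simp add: b_def algebra_simps)
    have al: "a \<notin> lattice t" using nl[OF wl, of "m+1"] by (simp add: a_def w_def algebra_simps)
    have bl: "b \<notin> lattice t" using nl[OF u0, of m] by (simp add: b_def)
    have Qa: "QQ t a = (1 - EE a) * QQ t (a + t)" by (rule QQ_shift[OF t al])
    have Qb: "QQ t b = (1 - EE b) * QQ t (b + t)" by (rule QQ_shift[OF t bl])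
    have nzb: "QQ t (b + t) \<noteq> 0" using QQ_nonzero[OF t nl[OF u0, of "m+1"]] b1 by simp
    have nzb': "QQ t b \<noteq> 0" using QQ_nonzero[OF t bl] .
    show ?thesis unfolding H_def p_def r_def a1 b1 using nzb nzb'
      unfolding a_def[symmetric] b_def[symmetric] Qa Qb by (simp add: field_simps)
  qed
  have sg: "g (m+1) * (1 - EE (- (w + of_int (m+1) * t))) = g m * (1 - EE (- (u0 + of_int m * t)))" for m
  proof -
    define A where "A = v0 + (\<alpha> + 1 + of_int (- m)) * t"
    define B where "B = v0 + of_int (- m) * t"
    have A1: "v0 + (\<alpha> + 1 + of_int (- (m+1))) * t = - (u0 + of_int m * t)" by (simp add: v0_def algebra_simps)
    have A2: "A = - (u0 + of_int m * t) + t" by (simp add: A_def v0_def algebra_simps)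
    have B1: "v0 + of_int (- (m+1)) * t = - (w + of_int (m+1) * t)" by (simp add: v0_def w_def algebra_simps)
    have B2: "B = - (w + of_int (m+1) * t) + t" by (simp add: B_def v0_def w_def algebra_simps)
    have QA: "QQ t (- (u0 + of_int m * t)) = (1 - EE (- (u0 + of_int m * t))) * QQ t A"
      unfolding A2 by (rule QQ_shift[OF t nlm[OF u0]])
    have QB: "QQ t (- (w + of_int (m+1) * t)) = (1 - EE (- (w + of_int (m+1) * t))) * QQ t B"
      unfolding B2 by (rule QQ_shift[OF t nlm[OF wl]])
    have nzB: "QQ t B \<noteq> 0"
    proof -
      have "B = - (w + of_int m * t)" by (simp add: B_def v0_def w_def algebra_simps)
      then show ?thesis using QQ_nonzero[OF t nlm[OF wl, of m]] by simp
    qed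
    have ne: "1 - EE (- (w + of_int (m+1) * t)) \<noteq> 0" using EE_ne1[OF nlm[OF wl, of "m+1"]] by simp
    show ?thesis unfolding g_def A1 B1 A_def[symmetric] B_def[symmetric] QA QB
      using nzB ne by (simp add: field_simps)
  qed
  have sD: "D (m+1) * p m = D m * r m" for m
  proof -
    define b where "b = u0 + of_int m * t"
    define X where "X = EE ((\<alpha> + 1) * t)"
    have Ea: "EE (u0 + (\<alpha> + 1 + of_int m) * t) = EE b * X"
      unfolding b_def X_def EE_add[symmetric] by (simp add: algebra_simps)
    have Ea': "EE (w + of_int (m+1) * t) = EE b * X"
      unfolding b_def X_def w_def EE_add[symmetric] by (simp add: algebra_simps)
    have Em: "EE (- (\<alpha> + 1) * of_int (m+1) * t) * X = EE (- (\<alpha> + 1) * of_int m * t)"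
      unfolding X_def EE_add[symmetric] by (simp add: algebra_simps)
    have iB: "EE (- b) * EE b = 1" by (rule EE_neg)
    have iA: "EE (- (w + of_int (m+1) * t)) * (EE b * X) = 1" using EE_neg[of "w + of_int (m+1) * t"] Ea' by simp
    have Xnz: "X \<noteq> 0" "EE b \<noteq> 0" by (simp_all add: X_def EE_nonzero)
    have ne: "1 - EE (- (w + of_int (m+1) * t)) \<noteq> 0" using EE_ne1[OF nlm[OF wl, of "m+1"]] by simp
    have gg: "g (m+1) = g m * (1 - EE (- b)) / (1 - EE (- (w + of_int (m+1) * t)))"
      using sg[of m] ne unfolding b_def by (simp add: field_simps)
    have "D (m+1) * p m = g m * EE (- (\<alpha> + 1) * of_int (m+1) * t) * ((1 - EE (- b)) * (1 - EE b * X) / (1 - EE (- (w + of_int (m+1) * t))))"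
      unfolding D_def p_def gg Ea by simp
    also have "(1 - EE (- b)) * (1 - EE b * X) / (1 - EE (- (w + of_int (m+1) * t))) = X * (1 - EE b)"
    proof -
      have e1: "EE (- b) = inverse (EE b)" using iB Xnz by (simp add: field_simps)
      have e2: "EE (- (w + of_int (m+1) * t)) = inverse (EE b * X)" using iA Xnz by (simp add: field_simps)
      have ne2: "1 - inverse (EE b * X) \<noteq> 0" using ne e2 by simp
      have ne3: "EE b * X \<noteq> 1" using ne2 by (metis inverse_1 right_minus_eq)
      show ?thesis unfolding e1 e2 using Xnz ne3 by (simp add: field_simps)
    qed
    also have "g m * EE (- (\<alpha> + 1) * of_int (m+1) * t) * (X * (1 - EE b)) = D m * r m"
      unfolding D_def r_def b_def[symmetric] Em[symmetric] by (simp only: mult_ac)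
    finally show ?thesis .
  qed
  have base: "D 0 = c * H 0"
  proof -
    have v0w: "v0 = - w" by (simp add: v0_def w_def)
    have g0: "D 0 = exp (- pi * \<i> * w) * QQ t (t - u0) / ((1 - EE (-w)) * QQ t (t - w))"
    proof -
      have q1: "QQ t (- w) = (1 - EE (-w)) * QQ t (t - w)"
        using QQ_shift[OF t, of "-w"] wl lattice_uminus by (auto simp: add.commute)
      have q2: "v0 + (\<alpha> + 1 + of_int (- 0)) * t = t - u0" by (simp add: v0_def algebra_simps)
      have q3: "v0 + of_int (- 0) * t = - w" by (simp add: v0w)
      have q4: "EE (- (\<alpha> + 1) * of_int 0 * t) = 1" by (simp add: EE_def)
      have q5: "exp (pi * \<i> * v0) = exp (- pi * \<i> * w)" by (simp add: v0w)
      show ?thesis unfolding D_def g_def q2 q3 q4 q5 q1 by simp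
    qed
    have Qw: "QQ t w = (1 - EE w) * QQ t (w + t)" by (rule QQ_shift[OF t wl])
    have h0: "H 0 = exp (pi * \<i> * u0) * QQ t (w + t) / QQ t u0"
      unfolding H_def by (simp add: w_def algebra_simps)
    have tu: "t - u0 \<notin> lattice t" "t - w \<notin> lattice t"
      using latt_shift[of "-u0" t 1] latt_shift[of "-w" t 1] u0 wl by (auto simp: lattice_uminus)
    have nz: "QQ t t \<noteq> 0" "QQ t u0 \<noteq> 0" "QQ t (t - u0) \<noteq> 0" "QQ t (t - w) \<noteq> 0"
       "QQ t (w + t) \<noteq> 0" "qpow t (1/8) \<noteq> 0"
      using QQ_tt_nonzero[OF t] QQ_nonzero[OF t] u0 tu nl[OF wl, of 1] by (auto simp: qpow_def)
    have ne: "1 - EE w \<noteq> 0" "1 - EE (-w) \<noteq> 0"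
      using EE_ne1[OF wl] EE_ne1[of "-w" t] wl by (auto simp: lattice_uminus)
    have s: "exp (- pi * \<i> * w) * exp (- pi * \<i> * w) * EE w = 1"
      unfolding EE_def by (simp add: exp_add[symmetric] algebra_simps)
    have ee: "EE (- w) * EE w = 1" by (rule EE_neg)
    have s2: "exp (- pi * \<i> * u0) * exp (pi * \<i> * u0) = 1"
      by (simp add: exp_add[symmetric])
    have ewnz: "EE w \<noteq> 0" "exp (- pi * \<i> * w) \<noteq> 0" by (simp_all add: EE_nonzero)
    have cH: "c * H 0 = - QQ t (t - u0) / (exp (- pi * \<i> * w) * (1 - EE w) * QQ t (t - w))"
      unfolding c_def h0 theta_QQ w_def[symmetric] Qw using nz ne ewnz
      by (simp add: field_simps exp_minus)
    have key: "exp (- pi * \<i> * w) / ((1 - EE (-w))) = - 1 / (exp (- pi * \<i> * w) * (1 - EE w))"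
    proof -
      have "EE (-w) = exp (- pi * \<i> * w) * exp (- pi * \<i> * w)" using s ee ewnz
        by (metis mult.commute mult_cancel_right)
      then show ?thesis using ne ewnz s by (simp add: field_simps)
    qed
    have "D 0 = exp (- pi * \<i> * w) / ((1 - EE (-w))) * (QQ t (t - u0) / QQ t (t - w))"
      unfolding g0 by simp
    also have "\<dots> = c * H 0" unfolding key cH by (simp add: field_simps)
    finally show ?thesis .
  qed
  have "D m = c * H m" by (rule int_two_sided[OF sD sH pnz rnz base])
  then show ?thesis unfolding D_def g_def H_def c_def .
qed



lemma EE_qpow: "exp (2 * pi * \<i> * z) * qpow t c = EE (z + c * t)"
  unfolding EE_def qpow_def by (simp add: exp_add[symmetric] algebra_simps)

lemma nome_EE: "nome t = EE t" unfolding nome_def EE_def ..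

lemma EE_sum: "EE (\<Sum>j\<in>A. f j) = (\<Prod>j\<in>A. EE (f j))"
  unfolding EE_def by (cases "finite A") (simp_all add: sum_distrib_left exp_sum)

lemma perj:
  fixes t \<alpha> u :: complex and k :: int
  assumes t: "Im t > 0" and u: "u \<notin> lattice t" and w: "u + \<alpha> * t \<notin> lattice t"
  shows "(-1) powi (-k) * exp (- 2 * pi * \<i> * of_int (-k) * (- \<alpha> * t - u)) *
           qpow t (of_int (-k * (-k + 1)) / 2) / theta (- \<alpha> * t - u) t
       = ((-1) powi k * exp (- 2 * pi * \<i> * of_int k * u) * qpow t (of_int (k * (k + 1)) / 2) / theta u t) *
         (EE (- (\<alpha> + 1) * of_int k * t) * (- theta u t / theta (u + \<alpha> * t) t))"
proof -
  have th: "theta (- \<alpha> * t - u) t = - theta (u + \<alpha> * t) t"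
  proof -
    have "- \<alpha> * t - u = - (u + \<alpha> * t)" by simp
    then show ?thesis using theta_odd[OF t w] by (simp only:)
  qed
  have nz: "theta u t \<noteq> 0" "theta (u + \<alpha> * t) t \<noteq> 0"
    using theta_nonzero[OF t u] theta_nonzero[OF t w] by auto
  have ex: "exp (- 2 * pi * \<i> * of_int (-k) * (- \<alpha> * t - u)) * qpow t (of_int (-k * (-k + 1)) / 2)
      = exp (- 2 * pi * \<i> * of_int k * u) * qpow t (of_int (k * (k + 1)) / 2) * EE (- (\<alpha> + 1) * of_int k * t)"
    unfolding qpow_def EE_def exp_add[symmetric]
    by (rule arg_cong[where f=exp]) (simp add: field_simps)
  have "(-1) powi (-k) * exp (- 2 * pi * \<i> * of_int (-k) * (- \<alpha> * t - u)) *
           qpow t (of_int (-k * (-k + 1)) / 2) / theta (- \<alpha> * t - u) t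
     = (-1) powi k * (exp (- 2 * pi * \<i> * of_int (-k) * (- \<alpha> * t - u)) *
           qpow t (of_int (-k * (-k + 1)) / 2)) / (- theta (u + \<alpha> * t) t)"
    unfolding th power_int_minus_one_minus by (simp only: mult.assoc)
  also have "\<dots> = (-1) powi k * (exp (- 2 * pi * \<i> * of_int k * u) * qpow t (of_int (k * (k + 1)) / 2) * EE (- (\<alpha> + 1) * of_int k * t)) / (- theta (u + \<alpha> * t) t)"
    unfolding ex ..
  also have "\<dots> = ((-1) powi k * exp (- 2 * pi * \<i> * of_int k * u) * qpow t (of_int (k * (k + 1)) / 2) / theta u t) *
         (EE (- (\<alpha> + 1) * of_int k * t) * (- theta u t / theta (u + \<alpha> * t) t))"
    using nz by (simp add: field_simps)
  finally show ?thesis .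
qed




theorem theorem1p1:
  fixes N :: nat and \<alpha> \<tau> :: complex and u :: "nat \<Rightarrow> complex"
  assumes "Im \<tau> > 0" and "N \<ge> 1"
    and "\<forall>j\<le>N. u j \<notin> lattice \<tau> \<and> u j + \<alpha> * \<tau> \<notin> lattice \<tau>"
  shows "exp (2 * pi * \<i> * \<alpha> * (\<Sum>j\<le>N. u j)) * exp (pi * \<i> * \<alpha>^2 * of_nat (N + 1) * \<tau>) *
           muhat N (\<lambda>j. - \<alpha> * \<tau> - u j) (\<alpha> + 1) \<tau>
         = (-1) ^ (N + 1) * (\<Prod>j\<le>N. theta (u j) \<tau>) / (\<Prod>j\<le>N. theta (u j + \<alpha> * \<tau>) \<tau>) *
           muhat N u (\<alpha> + 1) \<tau>"
proof -
  let ?t = \<tau>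
  have t: "Im \<tau> > 0" by fact
  have ul: "u j \<notin> lattice \<tau>" "u j + \<alpha> * \<tau> \<notin> lattice \<tau>" if "j \<le> N" for j
    using assms(3) that by auto
  define v where "v j = - \<alpha> * \<tau> - u j" for j
  define F where "F w n = exp (pi * \<i> * w 0) *
        qpoch (exp (2 * pi * \<i> * w 0) * qpow \<tau> (\<alpha> + 1 + of_int (\<Sum>j=1..N. n j))) (nome \<tau>) /
        qpoch (exp (2 * pi * \<i> * w 0) * qpow \<tau> (of_int (\<Sum>j=1..N. n j))) (nome \<tau>) *
        (\<Prod>j=1..N. (-1) powi (n j) * exp (- 2 * pi * \<i> * of_int (n j) * w j) *
                     qpow \<tau> (of_int (n j * (n j + 1)) / 2) / theta (w j) \<tau>)" for w :: "nat \<Rightarrow> complex" and n :: "nat \<Rightarrow> int"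
  have mu: "muhat N w (\<alpha> + 1) \<tau> = exp (pi * \<i> * \<alpha> * (\<Sum>j\<le>N. w j)) * infsum (F w) (intvecs N)" for w
    unfolding muhat_def F_def by simp
  define A where "A n j = (-1) powi (n j) * exp (- 2 * pi * \<i> * of_int (n j) * u j) *
                     qpow \<tau> (of_int (n j * (n j + 1)) / 2) / theta (u j) \<tau>" for n :: "nat \<Rightarrow> int" and j
  define c where "c j = - theta (u j) \<tau> / theta (u j + \<alpha> * \<tau>) \<tau>" for j
  define K where "K = (\<Prod>j\<le>N. c j)"
  have split0: "(\<Prod>j\<le>N. f j) = f 0 * (\<Prod>j=1..N. f j)" for f :: "nat \<Rightarrow> complex"
  proof -
    have "{..N} = insert 0 {1..N}" by auto
    then show ?thesis by simp
  qed
  have claim: "F v (\<lambda>j. - n j) = K * F u n" for n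
  proof -
    define m where "m = (\<Sum>j=1..N. n j)"
    have sm: "(\<Sum>j=1..N. - n j) = - m" unfolding m_def by (simp add: sum_negf)
    have Fu: "F u n = (exp (pi * \<i> * u 0) * QQ \<tau> (u 0 + (\<alpha> + 1 + of_int m) * \<tau>) / QQ \<tau> (u 0 + of_int m * \<tau>))
                * (\<Prod>j=1..N. A n j)"
      unfolding F_def A_def QQ_def EE_qpow nome_EE m_def by simp
    have prodj: "(\<Prod>j=1..N. (-1) powi (- n j) * exp (- 2 * pi * \<i> * of_int (- n j) * v j) *
                     qpow \<tau> (of_int (- n j * (- n j + 1)) / 2) / theta (v j) \<tau>)
          = (\<Prod>j=1..N. A n j * (EE (- (\<alpha> + 1) * of_int (n j) * \<tau>) * c j))"
      unfolding v_def A_def c_def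
      by (rule prod.cong[OF refl], rule perj[OF t]) (auto simp: ul)
    have pe: "(\<Prod>j=1..N. EE (- (\<alpha> + 1) * of_int (n j) * \<tau>)) = EE (- (\<alpha> + 1) * of_int m * \<tau>)"
      unfolding EE_sum[symmetric] m_def of_int_sum by (simp add: sum_distrib_left sum_distrib_right)
    have Fv: "F v (\<lambda>j. - n j) = (exp (pi * \<i> * v 0) * QQ \<tau> (v 0 + (\<alpha> + 1 + of_int (- m)) * \<tau>) / QQ \<tau> (v 0 + of_int (- m) * \<tau>))
                * ((\<Prod>j=1..N. A n j) * EE (- (\<alpha> + 1) * of_int m * \<tau>) * (\<Prod>j=1..N. c j))"
      unfolding F_def QQ_def EE_qpow nome_EE sm prodj prod.distrib pe by simp
    have cor: "exp (pi * \<i> * v 0) * QQ \<tau> (v 0 + (\<alpha> + 1 + of_int (- m)) * \<tau>) / QQ \<tau> (v 0 + of_int (- m) * \<tau>)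
          * EE (- (\<alpha> + 1) * of_int m * \<tau>)
       = c 0 * (exp (pi * \<i> * u 0) * QQ \<tau> (u 0 + (\<alpha> + 1 + of_int m) * \<tau>) / QQ \<tau> (u 0 + of_int m * \<tau>))"
      unfolding v_def c_def by (rule core[OF t ul(1)[of 0] ul(2)[of 0]]) auto
    have aux: "G * E = c0 * H \<Longrightarrow> G * (PA * E * PC) = (c0 * PC) * (H * PA)" for G E c0 H PA PC :: complex
      by (metis mult.assoc mult.commute)
    show ?thesis unfolding Fv Fu K_def split0 by (rule aux[OF cor])
  qed
  have bij: "bij_betw (\<lambda>n j. - n j) (intvecs N) (intvecs N)"
    by (rule bij_betwI[where g = "\<lambda>n j. - n j"]) (auto simp: intvecs_def)
  have inf: "infsum (F v) (intvecs N) = K * infsum (F u) (intvecs N)"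
  proof -
    have "infsum (F v) (intvecs N) = infsum (\<lambda>n. F v (\<lambda>j. - n j)) (intvecs N)"
      by (rule infsum_reindex_bij_betw[OF bij, symmetric])
    also have "\<dots> = infsum (\<lambda>n. K * F u n) (intvecs N)" by (simp add: claim)
    also have "\<dots> = K * infsum (F u) (intvecs N)" by (rule infsum_cmult_right')
    finally show ?thesis .
  qed
  have sv: "(\<Sum>j\<le>N. v j) = - (of_nat (N + 1) * \<alpha> * \<tau>) - (\<Sum>j\<le>N. u j)"
    unfolding v_def by (simp add: sum_subtractf)
  have Kf: "K = (-1) ^ (N + 1) * (\<Prod>j\<le>N. theta (u j) \<tau>) / (\<Prod>j\<le>N. theta (u j + \<alpha> * \<tau>) \<tau>)"
  proof -
    have "K = (\<Prod>j\<le>N. (-1::complex) * (theta (u j) \<tau> / theta (u j + \<alpha> * \<tau>) \<tau>))"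
      unfolding K_def c_def by simp
    also have "\<dots> = (-1) ^ (N + 1) * ((\<Prod>j\<le>N. theta (u j) \<tau>) / (\<Prod>j\<le>N. theta (u j + \<alpha> * \<tau>) \<tau>))"
      unfolding prod.distrib prod_constant prod_dividef card_atMost Suc_eq_plus1 ..
    finally show ?thesis by simp
  qed
  have ex: "exp (2 * pi * \<i> * \<alpha> * (\<Sum>j\<le>N. u j)) * exp (pi * \<i> * \<alpha>^2 * of_nat (N + 1) * \<tau>) *
        exp (pi * \<i> * \<alpha> * (\<Sum>j\<le>N. v j)) = exp (pi * \<i> * \<alpha> * (\<Sum>j\<le>N. u j))"
    unfolding sv exp_add[symmetric] by (rule arg_cong[where f=exp]) (simp add: algebra_simps power2_eq_square)
  have "exp (2 * pi * \<i> * \<alpha> * (\<Sum>j\<le>N. u j)) * exp (pi * \<i> * \<alpha>^2 * of_nat (N + 1) * \<tau>) *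
           muhat N v (\<alpha> + 1) \<tau> = exp (pi * \<i> * \<alpha> * (\<Sum>j\<le>N. u j)) * (K * infsum (F u) (intvecs N))"
    unfolding mu inf using ex by (simp add: mult_ac)
  also have "\<dots> = K * muhat N u (\<alpha> + 1) \<tau>" unfolding mu by (simp add: mult_ac)
  finally show ?thesis unfolding Kf v_def .
qed

end
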